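(* In the setting described in the context, for every $\xi\in\Omega_M$ the set $$\mathcal{F}(\xi):=\Big\{\mu\in\mathbb{H}^p_0:\ \int_{\mathbb{R}^n}F(z+\xi)\,d\mu(z)\le\varepsilon+R(\xi)\Big\}$$ is a non-empty subset of $Y_M$ which is closed in $Y_M$ with respect to the weak* topology of $E^*$.
   Context: $1<p<\infty$; $\Omega\subset\mathbb{R}^N$ open bounded with $|\partial\Omega|=0$; $\mathcal{A}v=\sum_{i=1}^NA^i\partial v/\partial x_i$ with linear $A^i\colon\mathbb{R}^n\to\mathbb{R}^d$, symbol $\mathbb{A}(w)=\sum w_iA^i$ of constant rank on $S^{N-1}$. $\mathbb{H}^p_0$ is the set of probability measures $\mu$ on $\mathbb{R}^n$ with $\int z\,d\mu=0$ that are homogeneous Young measures generated by a sequence $\{V_j\}\subset\mathrm{L}^p(\Omega;\mathbb{R}^n)$ with $\mathcal{A}V_j=0$ and $V_j$ weakly convergent in $\mathrm{L}^p$. $E:=\{g\in C(\mathbb{R}^n):\lim_{|z|\to\infty}g(z)/(1+|z|^p)\text{ exists in }\mathbb{R}\}$ with norm $\|g\|_E=\sup_z|g(z)|/(1+|z|^p)$; probability measures with finite $p$-th moment are regarded as elements of $E^*$. $F\colon\mathbb{R}^n\to[0,\infty]$ is lower semi-continuous with $F(\xi)\ge C|\xi|^p$ for some $C>0$. Define $R(\xi):=\inf_{\nu\in\mathbb{H}^p_0}\int F(z+\xi)\,d\nu(z)$. Fix $\varepsilon>0$ and $M\in\mathbb{N}$, let $\Omega_M:=\{\xi\in\mathbb{R}^n:|\xi|<M,\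 R(\xi)\le M\}$, let $C_M>0$ be a constant such that every $\mu\in\mathbb{H}^p_0$ with $\int F(z+\xi)\,d\mu(z)\le\varepsilon+R(\xi)$ for some $\xi\in\Omega_M$ satisfies $\int|z|^p\,d\mu\le C_M$, and let $Y_M:=\{\mu\in\mathbb{H}^p_0:\int|z|^p\,d\mu(z)\le C_M\}$, equipped with the weak* topology of $E^*$. *)

theory Defs
  imports "HOL-Probability.Probability"
begin

definition Lp :: "real \<Rightarrow> 'a::euclidean_space set \<Rightarrow> ('a \<Rightarrow> 'b::euclidean_space) set" where
  "Lp p \<Omega> = {V. V \<in> borel_measurable (lebesgue_on \<Omega>) \<and>
                 integrable (lebesgue_on \<Omega>) (\<lambda>x. norm (V x) powr p)}"

definition partial_deriv :: "'m::finite \<Rightarrow> (real^'m \<Rightarrow> 'b::real_normed_vector) \<Rightarrow> real^'m \<Rightarrow> 'b" where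
  "partial_deriv i f x = frechet_derivative f (at x) (axis i 1)"

definition smooth_fun :: "(real^'m::finite \<Rightarrow> 'b::real_normed_vector) \<Rightarrow> bool" where
  "smooth_fun f \<longleftrightarrow> (\<forall>is. foldr partial_deriv is f differentiable_on UNIV)"

definition test_fun :: "(real^'m::finite) set \<Rightarrow> (real^'m \<Rightarrow> 'b::real_normed_vector) \<Rightarrow> bool" where
  "test_fun \<Omega> \<psi> \<longleftrightarrow> smooth_fun \<psi> \<and> compact (closure {x. \<psi> x \<noteq> 0})
                      \<and> closure {x. \<psi> x \<noteq> 0} \<subseteq> \<Omega>"

definition symbol :: "('m::finite \<Rightarrow> real^'n \<Rightarrow> real^'d) \<Rightarrow> real^'m \<Rightarrow> real^'n \<Rightarrow> real^'d" where
  "symbol A w v = (\<Sum>i\<in>UNIV. w$i *\<^sub>R A i v)"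

text \<open>\<A>V = 0 in the sense of distributions on \<Omega>.\<close>
definition A_free :: "('m::finite \<Rightarrow> real^'n \<Rightarrow> real^'d) \<Rightarrow> (real^'m) set \<Rightarrow> (real^'m \<Rightarrow> real^'n) \<Rightarrow> bool" where
  "A_free A \<Omega> V \<longleftrightarrow> (\<forall>\<psi> :: real^'m \<Rightarrow> real^'d. test_fun \<Omega> \<psi> \<longrightarrow>
      integral\<^sup>L (lebesgue_on \<Omega>) (\<lambda>x. \<Sum>i\<in>UNIV. inner (A i (V x)) (partial_deriv i \<psi> x)) = 0)"

definition weakly_conv_Lp :: "real \<Rightarrow> 'a::euclidean_space set \<Rightarrow> (nat \<Rightarrow> 'a \<Rightarrow> 'b::euclidean_space) \<Rightarrow> bool" where
  "weakly_conv_Lp p \<Omega> V \<longleftrightarrow> (\<exists>V0 \<in> Lp p \<Omega>. \<forall>w \<in> Lp (p / (p - 1)) \<Omega>.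
      (\<lambda>j. integral\<^sup>L (lebesgue_on \<Omega>) (\<lambda>x. inner (w x) (V j x)))
        \<longlonglongrightarrow> integral\<^sup>L (lebesgue_on \<Omega>) (\<lambda>x. inner (w x) (V0 x)))"

definition C0 :: "('b::real_normed_vector \<Rightarrow> real) \<Rightarrow> bool" where
  "C0 \<phi> \<longleftrightarrow> continuous_on UNIV \<phi> \<and> (\<phi> \<longlongrightarrow> 0) at_infinity"

text \<open>The sequence V generates the homogeneous Young measure \<mu>:
  \<phi>(V_j) converges weakly* in L^infinity(\<Omega>) to the constant \<integral>\<phi> d\<mu>, for every \<phi> in C_0.\<close>
definition generates_hom :: "'a::euclidean_space set \<Rightarrow> (nat \<Rightarrow> 'a \<Rightarrow> 'b::euclidean_space) \<Rightarrow> 'b measure \<Rightarrow> bool" where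
  "generates_hom \<Omega> V \<mu> \<longleftrightarrow> (\<forall>\<phi>. C0 \<phi> \<longrightarrow> (\<forall>g. integrable (lebesgue_on \<Omega>) g \<longrightarrow>
      (\<lambda>j. integral\<^sup>L (lebesgue_on \<Omega>) (\<lambda>x. g x * \<phi> (V j x)))
        \<longlonglongrightarrow> integral\<^sup>L (lebesgue_on \<Omega>) g * integral\<^sup>L \<mu> \<phi>))"

definition prob_meas :: "'b::euclidean_space measure \<Rightarrow> bool" where
  "prob_meas \<mu> \<longleftrightarrow> prob_space \<mu> \<and> sets \<mu> = sets borel"

definition H0 :: "real \<Rightarrow> (real^'m::finite) set \<Rightarrow> ('m \<Rightarrow> real^'n \<Rightarrow> real^'d) \<Rightarrow> (real^'n) measure set" where
  "H0 p \<Omega> A = {\<mu>. prob_meas \<mu> \<and> integrable \<mu> (\<lambda>z. z) \<and> integral\<^sup>L \<mu> (\<lambda>z. z) = 0 \<and>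
      (\<exists>V. (\<forall>j. V j \<in> Lp p \<Omega>) \<and> (\<forall>j. A_free A \<Omega> (V j)) \<and> weakly_conv_Lp p \<Omega> V
           \<and> generates_hom \<Omega> V \<mu>)}"

definition E_space :: "real \<Rightarrow> ('b::real_normed_vector \<Rightarrow> real) set" where
  "E_space p = {g. continuous_on UNIV g \<and>
      (\<exists>l. ((\<lambda>z. g z / (1 + norm z powr p)) \<longlongrightarrow> l) at_infinity)}"

text \<open>Probability measures with finite p-th moment (regarded as elements of E^*).\<close>
definition Pmeas_p :: "real \<Rightarrow> 'b::euclidean_space measure set" where
  "Pmeas_p p = {\<mu>. prob_meas \<mu> \<and> integrable \<mu> (\<lambda>z. norm z powr p)}"

text \<open>Weak* topology of E^* restricted to these measures: the initial topology of
  the pairings \<mu> \<mapsto> \<integral> g d\<mu>, g \<in> E.\<close>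
definition weakstar :: "real \<Rightarrow> 'b::euclidean_space measure topology" where
  "weakstar p = pullback_topology (Pmeas_p p)
      (\<lambda>\<mu>. restrict (\<lambda>g. integral\<^sup>L \<mu> g) (E_space p))
      (product_topology (\<lambda>_. euclideanreal) (E_space p))"

definition lsc :: "('a::topological_space \<Rightarrow> ennreal) \<Rightarrow> bool" where
  "lsc F \<longleftrightarrow> (\<forall>x. F x \<le> Liminf (at x) F)"

definition Rfun :: "real \<Rightarrow> (real^'m::finite) set \<Rightarrow> ('m \<Rightarrow> real^'n \<Rightarrow> real^'d)
      \<Rightarrow> (real^'n \<Rightarrow> ennreal) \<Rightarrow> real^'n \<Rightarrow> ennreal" where
  "Rfun p \<Omega> A F \<xi> = (INF \<nu>\<in>H0 p \<Omega> A. \<integral>\<^sup>+ z. F (z + \<xi>) \<partial>\<nu>)"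

definition Omega_M :: "real \<Rightarrow> (real^'m::finite) set \<Rightarrow> ('m \<Rightarrow> real^'n \<Rightarrow> real^'d)
      \<Rightarrow> (real^'n \<Rightarrow> ennreal) \<Rightarrow> nat \<Rightarrow> (real^'n) set" where
  "Omega_M p \<Omega> A F M = {\<xi>. norm \<xi> < real M \<and> Rfun p \<Omega> A F \<xi> \<le> of_nat M}"

definition Y_M :: "real \<Rightarrow> (real^'m::finite) set \<Rightarrow> ('m \<Rightarrow> real^'n \<Rightarrow> real^'d)
      \<Rightarrow> real \<Rightarrow> (real^'n) measure set" where
  "Y_M p \<Omega> A CM = {\<mu> \<in> H0 p \<Omega> A. (\<integral>\<^sup>+ z. ennreal (norm z powr p) \<partial>\<mu>) \<le> ennreal CM}"

definition Fset :: "real \<Rightarrow> (real^'m::finite) set \<Rightarrow> ('m \<Rightarrow> real^'n \<Rightarrow> real^'d)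
      \<Rightarrow> (real^'n \<Rightarrow> ennreal) \<Rightarrow> real \<Rightarrow> real^'n \<Rightarrow> (real^'n) measure set" where
  "Fset p \<Omega> A F \<epsilon> \<xi> = {\<mu> \<in> H0 p \<Omega> A.
      (\<integral>\<^sup>+ z. F (z + \<xi>) \<partial>\<mu>) \<le> ennreal \<epsilon> + Rfun p \<Omega> A F \<xi>}"

end

theory Submission imports Defs begin

definition gk :: "('a::metric_space \<Rightarrow> ennreal) \<Rightarrow> nat \<Rightarrow> 'a \<Rightarrow> real" where
  "gk F k x = Inf (range (\<lambda>y. enn2real (min (F y) (of_nat k)) + real k * dist x y))"

lemma gk_bdd: "bdd_below (range (\<lambda>y. enn2real (min (F y) (of_nat k)) + real k * dist x y))"
  by (rule bdd_belowI[of _ 0]) auto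

lemma gk_nonneg: "0 \<le> gk F k x"
  unfolding gk_def by (rule cInf_greatest) auto

lemma gk_lower: "gk F k x \<le> enn2real (min (F y) (of_nat k)) + real k * dist x y"
  unfolding gk_def by (rule cInf_lower[OF _ gk_bdd]) auto

lemma enn2real_min_le: "enn2real (min (F::ennreal) (of_nat k)) \<le> real k"
  by (metis enn2real_mono enn2real_of_nat ennreal_of_nat_neq_top min.cobounded2 of_nat_less_top)

lemma min_lt_top: "min (a::ennreal) (of_nat k) < top"
  by (rule le_less_trans[OF min.cobounded2]) (simp add: of_nat_less_top)

lemma gk_le_k: "gk F k x \<le> real k"
  using gk_lower[of F k x x] enn2real_min_le[of "F x" k] by simp

lemma gk_le_F: "ennreal (gk F k x) \<le> F x"
proof -
  have "gk F k x \<le> enn2real (min (F x) (of_nat k))" using gk_lower[of F k x x] by simp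
  hence "ennreal (gk F k x) \<le> ennreal (enn2real (min (F x) (of_nat k)))" by (rule ennreal_leI)
  also have "\<dots> = min (F x) (of_nat k)"
    using min_lt_top[of "F x" k] by simp
  also have "\<dots> \<le> F x" by simp
  finally show ?thesis .
qed

lemma gk_lip: "gk F k x \<le> gk F k x' + real k * dist x x'"
proof -
  have "gk F k x - real k * dist x x' \<le> gk F k x'"
    unfolding gk_def[of F k x']
  proof (rule cInf_greatest)
    fix t assume "t \<in> range (\<lambda>y. enn2real (min (F y) (of_nat k)) + real k * dist x' y)"
    then obtain y where t: "t = enn2real (min (F y) (of_nat k)) + real k * dist x' y" by auto
    have "dist x y \<le> dist x x' + dist x' y" by (rule dist_triangle)
    hence "real k * dist x y \<le> real k * dist x x' + real k * dist x' y"
      by (metis distrib_left mult_left_mono of_nat_0_le_iff)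
    thus "gk F k x - real k * dist x x' \<le> t" using gk_lower[of F k x y] t by simp
  qed auto
  thus ?thesis by simp
qed

lemma gk_cont: "continuous_on UNIV (gk F k)"
proof (rule lipschitz_on_continuous_on[of "real k"])
  show "(real k)-lipschitz_on UNIV (gk F k)"
  proof (rule lipschitz_onI)
    fix x y
    show "dist (gk F k x) (gk F k y) \<le> real k * dist x y"
      using gk_lip[of F k x y] gk_lip[of F k y x] by (simp add: dist_real_def dist_commute abs_le_iff)
  qed simp
qed

lemma gk_mono: "gk F k x \<le> gk F (Suc k) x"
  unfolding gk_def[of F "Suc k" x]
proof (rule cInf_greatest)
  fix t assume "t \<in> range (\<lambda>y. enn2real (min (F y) (of_nat (Suc k))) + real (Suc k) * dist x y)"
  then obtain y where t: "t = enn2real (min (F y) (of_nat (Suc k))) + real (Suc k) * dist x y" by auto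
  have "enn2real (min (F y) (of_nat k)) \<le> enn2real (min (F y) (of_nat (Suc k)))"
    by (rule enn2real_mono) (use min_lt_top[of "F y" "Suc k"] in \<open>auto simp: min.coboundedI2\<close>)
  moreover have "real k * dist x y \<le> real (Suc k) * dist x y"
    by (simp add: mult_right_mono)
  ultimately show "gk F k x \<le> t" using gk_lower[of F k x y] t by linarith
qed auto

lemma gk_mono2: "m \<le> n \<Longrightarrow> gk F m x \<le> gk F n x"
  by (rule lift_Suc_mono_le[of "\<lambda>k. gk F k x"]) (auto intro: gk_mono)

lemma gk_incseq: "incseq (\<lambda>k. ennreal (gk F k x))"
  by (rule incseq_SucI) (simp add: ennreal_leI gk_mono)

lemma gk_sup:
  fixes F :: "'a::metric_space \<Rightarrow> ennreal"
  assumes "F x \<le> Liminf (at x) F"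
  shows "(SUP k. ennreal (gk F k x)) = F x"
proof (rule antisym)
  show "(SUP k. ennreal (gk F k x)) \<le> F x" by (rule SUP_least) (rule gk_le_F)
  show "F x \<le> (SUP k. ennreal (gk F k x))"
  proof (rule dense_le)
    fix b assume b: "b < F x"
    define a where "a = enn2real b"
    have bt: "b \<noteq> top" using b by auto
    have a: "b = ennreal a" "0 \<le> a" using bt unfolding a_def by (auto simp: less_top)
    have "ennreal a < Liminf (at x) F" using b a assms by simp
    hence "\<forall>\<^sub>F y in at x. ennreal a < F y" by (rule less_LiminfD)
    then obtain d where d: "d > 0" "\<And>y. y \<noteq> x \<Longrightarrow> dist y x < d \<Longrightarrow> ennreal a < F y"
      unfolding eventually_at by auto
    obtain k :: nat where k: "real k \<ge> a" "real k \<ge> a / d"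
      by (metis max.boundedE real_arch_simple)
    have "a \<le> gk F k x"
      unfolding gk_def
    proof (rule cInf_greatest)
      fix t assume "t \<in> range (\<lambda>y. enn2real (min (F y) (of_nat k)) + real k * dist x y)"
      then obtain y where t: "t = enn2real (min (F y) (of_nat k)) + real k * dist x y" by auto
      show "a \<le> t"
      proof (cases "dist y x < d")
        case True
        have "ennreal a < F y" using d(2)[of y] True b a by (cases "y = x") auto
        moreover have "ennreal a \<le> of_nat k" using k(1)
          by (simp add: ennreal_of_nat_eq_real_of_nat ennreal_leI)
        ultimately have "ennreal a \<le> min (F y) (of_nat k)" by simp
        hence "enn2real (ennreal a) \<le> enn2real (min (F y) (of_nat k))"
          by (rule enn2real_mono) (simp_all add: min_lt_top)
        hence "a \<le> enn2real (min (F y) (of_nat k))" using a(2) by simp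
        moreover have "0 \<le> real k * dist x y" by simp
        ultimately show ?thesis using t by linarith
      next
        case False
        have "a \<le> real k * d" using k(2) d(1) by (simp add: divide_le_eq)
        also have "\<dots> \<le> real k * dist x y" using False by (simp add: dist_commute mult_left_mono)
        moreover have "0 \<le> enn2real (min (F y) (of_nat k))" by simp
        ultimately show ?thesis using t by linarith
      qed
    qed auto
    hence "b \<le> ennreal (gk F k x)" using a by (simp add: ennreal_leI)
    also have "\<dots> \<le> (SUP k. ennreal (gk F k x))" by (rule SUP_upper) simp
    finally show "b \<le> (SUP k. ennreal (gk F k x))" .
  qed
qed


lemma gk_measurable:
  fixes \<xi> :: "'a::euclidean_space"
  shows "(\<lambda>z. gk F k (z + \<xi>)) \<in> borel_measurable borel"
proof -
  have "continuous_on UNIV (\<lambda>z. gk F k (z + \<xi>))"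
    by (rule continuous_on_compose2[OF gk_cont]) (auto intro!: continuous_on_add continuous_on_id continuous_on_const)
  thus ?thesis by (rule borel_measurable_continuous_onI)
qed

lemma int_eq:
  fixes F :: "'a::euclidean_space \<Rightarrow> ennreal"
  assumes "prob_space \<mu>" "sets \<mu> = sets borel" "lsc F"
  shows "(\<integral>\<^sup>+z. F (z+\<xi>) \<partial>\<mu>) = (SUP k. ennreal (\<integral> z. gk F k (z+\<xi>) \<partial>\<mu>))"
proof -
  interpret prob_space \<mu> by fact
  have meas: "(\<lambda>z. gk F k (z + \<xi>)) \<in> borel_measurable \<mu>" for k
    using gk_measurable measurable_cong_sets[OF assms(2) refl] by blast
  have "(\<integral>\<^sup>+z. F (z+\<xi>) \<partial>\<mu>) = (\<integral>\<^sup>+z. (SUP k. ennreal (gk F k (z+\<xi>))) \<partial>\<mu>)"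
    using assms(3) unfolding lsc_def by (simp add: gk_sup)
  also have "\<dots> = (SUP k. (\<integral>\<^sup>+z. ennreal (gk F k (z+\<xi>)) \<partial>\<mu>))"
  proof (rule nn_integral_monotone_convergence_SUP)
    show "incseq (\<lambda>k z. ennreal (gk F k (z + \<xi>)))"
      by (auto simp: incseq_def le_fun_def intro!: ennreal_leI gk_mono2)
    fix k show "(\<lambda>z. ennreal (gk F k (z + \<xi>))) \<in> borel_measurable \<mu>"
      using meas[of k] by measurable
  qed
  also have "\<dots> = (SUP k. ennreal (\<integral> z. gk F k (z+\<xi>) \<partial>\<mu>))"
  proof (rule SUP_cong[OF refl])
    fix k
    have "integrable \<mu> (\<lambda>z. gk F k (z + \<xi>))"
      by (rule integrable_const_bound[where B="real k"]) (auto simp: gk_nonneg gk_le_k meas)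
    thus "(\<integral>\<^sup>+z. ennreal (gk F k (z+\<xi>)) \<partial>\<mu>) = ennreal (\<integral> z. gk F k (z+\<xi>) \<partial>\<mu>)"
      by (rule nn_integral_eq_integral) (simp add: gk_nonneg)
  qed
  finally show ?thesis .
qed

lemma E_mem:
  fixes \<xi> :: "'a::euclidean_space"
  assumes p: "1 < p"
  shows "(\<lambda>z. gk F k (z + \<xi>)) \<in> E_space p"
  unfolding E_space_def
proof (intro CollectI conjI exI)
  show "continuous_on UNIV (\<lambda>z. gk F k (z + \<xi>))"
    by (rule continuous_on_compose2[OF gk_cont]) (auto intro!: continuous_on_add continuous_on_id continuous_on_const)
  have den: "filterlim (\<lambda>z::'a. 1 + norm z powr p) at_infinity at_infinity"
  proof -
    have "filterlim (\<lambda>z::'a. 1 + norm z powr p) at_top at_infinity"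
    proof (rule filterlim_at_top_mono[OF filterlim_norm_at_top])
      have "\<forall>\<^sub>F z in at_infinity. norm (z::'a) \<ge> 1"
        using filterlim_norm_at_top unfolding filterlim_at_top by blast
      thus "\<forall>\<^sub>F z in at_infinity. norm (z::'a) \<le> 1 + norm z powr p"
      proof eventually_elim
        case (elim z)
        have "norm z powr 1 \<le> norm z powr p" using elim p by (intro powr_mono) auto
        thus ?case using elim by simp
      qed
    qed
    thus ?thesis by (rule filterlim_at_top_imp_at_infinity)
  qed
  have "((\<lambda>z::'a. real k / (1 + norm z powr p)) \<longlongrightarrow> 0) at_infinity"
    by (rule tendsto_divide_0[OF tendsto_const den])
  thus "((\<lambda>z. gk F k (z + \<xi>) / (1 + norm z powr p)) \<longlongrightarrow> 0) at_infinity"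
  proof (rule Lim_null_comparison[rotated])
    show "\<forall>\<^sub>F z in at_infinity. norm (gk F k (z + \<xi>) / (1 + norm z powr p)) \<le> real k / (1 + norm z powr p)"
    proof (rule always_eventually, rule allI)
      fix z :: 'a
      have "0 < 1 + norm z powr p" by (simp add: add_pos_nonneg)
      thus "norm (gk F k (z + \<xi>) / (1 + norm z powr p)) \<le> real k / (1 + norm z powr p)"
        using gk_nonneg[of F k "z+\<xi>"] gk_le_k[of F k "z+\<xi>"]
        by (simp add: divide_right_mono)
    qed
  qed
qed

lemma cont_pair:
  assumes "h \<in> E_space p"
  shows "continuous_map (weakstar p) euclideanreal (\<lambda>\<mu>::'b::euclidean_space measure. integral\<^sup>L \<mu> h)"
proof -
  have "continuous_map (weakstar p) euclideanreal
     ((\<lambda>x. x h) \<circ> (\<lambda>\<mu>::'b measure. restrict (\<lambda>g. integral\<^sup>L \<mu> g) (E_space p)))"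
    unfolding weakstar_def
    by (rule continuous_map_pullback) (rule continuous_map_product_projection[OF assms])
  moreover have "((\<lambda>x. x h) \<circ> (\<lambda>\<mu>::'b measure. restrict (\<lambda>g. integral\<^sup>L \<mu> g) (E_space p)))
      = (\<lambda>\<mu>. integral\<^sup>L \<mu> h)" using assms by auto
  ultimately show ?thesis by simp
qed

theorem lemma3p4:
  fixes p \<epsilon> C CM :: real
    and M :: nat
    and \<Omega> :: "(real^'m::finite) set"
    and A :: "'m \<Rightarrow> real^'n::finite \<Rightarrow> real^'d::finite"
    and F :: "real^'n \<Rightarrow> ennreal"
    and \<xi> :: "real^'n"
  assumes p: "1 < p"
    and open_\<Omega>: "open \<Omega>" and bounded_\<Omega>: "bounded \<Omega>"
    and boundary: "emeasure lebesgue (frontier \<Omega>) = 0"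
    and lin: "\<forall>i. linear (A i)"
    and const_rank: "\<exists>r. \<forall>w::real^'m. norm w = 1 \<longrightarrow> dim (range (symbol A w)) = r"
    and F_lsc: "lsc F"
    and C_pos: "C > 0"
    and F_growth: "\<forall>z. ennreal (C * norm z powr p) \<le> F z"
    and eps: "\<epsilon> > 0"
    and CM_pos: "CM > 0"
    and CM_bound: "\<forall>\<mu> \<in> H0 p \<Omega> A. \<forall>\<eta> \<in> Omega_M p \<Omega> A F M.
        (\<integral>\<^sup>+ z. F (z + \<eta>) \<partial>\<mu>) \<le> ennreal \<epsilon> + Rfun p \<Omega> A F \<eta> \<longrightarrow>
        (\<integral>\<^sup>+ z. ennreal (norm z powr p) \<partial>\<mu>) \<le> ennreal CM"
    and xi: "\<xi> \<in> Omega_M p \<Omega> A F M"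
  shows "Fset p \<Omega> A F \<epsilon> \<xi> \<noteq> {} \<and> Fset p \<Omega> A F \<epsilon> \<xi> \<subseteq> Y_M p \<Omega> A CM \<and>
         closedin (subtopology (weakstar p) (Y_M p \<Omega> A CM)) (Fset p \<Omega> A F \<epsilon> \<xi>)"
proof -
  let ?R = "Rfun p \<Omega> A F \<xi>"
  define c where "c = enn2real (ennreal \<epsilon> + ?R)"
  have RM: "?R \<le> of_nat M" using xi by (simp add: Omega_M_def)
  hence Rtop: "?R \<noteq> top" using of_nat_less_top[of M] by (metis top.not_eq_extremum order.strict_trans1)
  have ctop: "ennreal \<epsilon> + ?R = ennreal c" unfolding c_def using Rtop by (simp add: ennreal_enn2real less_top)
  have c0: "0 \<le> c" unfolding c_def by simp
  have ne: "Fset p \<Omega> A F \<epsilon> \<xi> \<noteq> {}"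
  proof -
    obtain r where r: "?R = ennreal r" "0 \<le> r" using Rtop by (cases ?R) auto
    have "ennreal r < ennreal (\<epsilon> + r)" using eps r by (simp add: ennreal_less_iff)
    hence "?R < ennreal \<epsilon> + ?R" using r eps by (simp add: ennreal_plus)
    hence "(INF \<nu>\<in>H0 p \<Omega> A. \<integral>\<^sup>+ z. F (z + \<xi>) \<partial>\<nu>) < ennreal \<epsilon> + ?R" by (simp add: Rfun_def)
    then obtain \<nu> where "\<nu> \<in> H0 p \<Omega> A" "(\<integral>\<^sup>+ z. F (z + \<xi>) \<partial>\<nu>) < ennreal \<epsilon> + ?R"
      by (auto simp: INF_less_iff)
    thus ?thesis unfolding Fset_def by (auto intro: less_imp_le)
  qed
  have sub: "Fset p \<Omega> A F \<epsilon> \<xi> \<subseteq> Y_M p \<Omega> A CM"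
    using CM_bound xi unfolding Fset_def Y_M_def by blast
  define h where "h k = (\<lambda>z. gk F k (z + \<xi>))" for k
  have hE: "h k \<in> E_space p" for k unfolding h_def by (rule E_mem[OF p])
  define T where "T = (\<Inter>k. {\<mu> \<in> topspace (weakstar p). integral\<^sup>L \<mu> (h k) \<in> {..c}})"
  have Tk: "closedin (weakstar p) {\<mu> \<in> topspace (weakstar p). integral\<^sup>L \<mu> (h k) \<in> {..c}}" for k
    by (rule closedin_continuous_map_preimage[OF cont_pair[OF hE]]) (simp add: closed_closedin[symmetric])
  have Tc: "closedin (weakstar p) T"
    unfolding T_def
    by (rule closedin_Inter) (use Tk in blast)+
  have inteq: "(\<integral>\<^sup>+z. F (z+\<xi>) \<partial>\<mu>) = (SUP k. ennreal (integral\<^sup>L \<mu> (h k)))"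
    if "\<mu> \<in> H0 p \<Omega> A" for \<mu>
    using that int_eq[of \<mu> F \<xi>] F_lsc unfolding h_def H0_def prob_meas_def by auto
  have top: "topspace (weakstar p) = Pmeas_p p"
    unfolding weakstar_def topspace_pullback_topology topspace_product_topology by auto
  have eq: "Fset p \<Omega> A F \<epsilon> \<xi> = T \<inter> Y_M p \<Omega> A CM"
  proof (intro equalityI subsetI)
    fix \<mu> assume m: "\<mu> \<in> Fset p \<Omega> A F \<epsilon> \<xi>"
    hence mY: "\<mu> \<in> Y_M p \<Omega> A CM" using sub by blast
    hence mH: "\<mu> \<in> H0 p \<Omega> A" and mom: "(\<integral>\<^sup>+ z. ennreal (norm z powr p) \<partial>\<mu>) \<le> ennreal CM"
      unfolding Y_M_def by auto
    have pm: "prob_meas \<mu>" using mH unfolding H0_def by auto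
    have bm: "(\<lambda>z::real^'n. norm z powr p) \<in> borel_measurable borel" by measurable
    have "sets \<mu> = sets borel" using pm unfolding prob_meas_def by simp
    hence meas: "(\<lambda>z. norm z powr p) \<in> borel_measurable \<mu>"
      using bm measurable_cong_sets[OF _ refl] by blast
    have fin: "(\<integral>\<^sup>+ z. ennreal (norm z powr p) \<partial>\<mu>) < top" using mom by (simp add: le_less_trans)
    have "integrable \<mu> (\<lambda>z. norm z powr p)"
      by (intro integrableI_bounded meas) (use fin in simp)
    hence mP: "\<mu> \<in> topspace (weakstar p)" unfolding top Pmeas_p_def using pm by auto
    have "\<mu> \<in> T" unfolding T_def
    proof (intro InterI, clarsimp simp: mP)
      fix k
      have "ennreal (integral\<^sup>L \<mu> (h k)) \<le> (\<integral>\<^sup>+z. F (z+\<xi>) \<partial>\<mu>)"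
        unfolding inteq[OF mH] by (rule SUP_upper) simp
      also have "\<dots> \<le> ennreal c" using m ctop unfolding Fset_def by simp
      finally show "integral\<^sup>L \<mu> (h k) \<le> c" using c0 by (auto simp: ennreal_le_iff2 ennreal_le_iff)
    qed
    thus "\<mu> \<in> T \<inter> Y_M p \<Omega> A CM" using mY by blast
  next
    fix \<mu> assume m: "\<mu> \<in> T \<inter> Y_M p \<Omega> A CM"
    hence mH: "\<mu> \<in> H0 p \<Omega> A" unfolding Y_M_def by auto
    have "(\<integral>\<^sup>+z. F (z+\<xi>) \<partial>\<mu>) \<le> ennreal c"
      unfolding inteq[OF mH]
    proof (rule SUP_least)
      fix k
      have "integral\<^sup>L \<mu> (h k) \<le> c" using m unfolding T_def by auto
      thus "ennreal (integral\<^sup>L \<mu> (h k)) \<le> ennreal c" by (rule ennreal_leI)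
    qed
    thus "\<mu> \<in> Fset p \<Omega> A F \<epsilon> \<xi>" using mH ctop unfolding Fset_def by simp
  qed
  have "closedin (subtopology (weakstar p) (Y_M p \<Omega> A CM)) (Fset p \<Omega> A F \<epsilon> \<xi>)"
    unfolding closedin_subtopology using Tc eq by blast
  with ne sub show ?thesis by blast
qed

end
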